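(* Let $\gamma>\frac{4}{\sqrt n}$ and $B>\gamma\sqrt n$. For every input stream $a\in\{-1,0,1\}^n$, the output of algorithm $\mathsf{Apr}$ (with parameters $\gamma,B$) satisfies, with probability at least $1-\frac{1}{n^3}$ over its private randomness $r$, $$\Big|\mathsf{Apr}(a,r)-\sum_{j=1}^n a_j\Big|\le\frac{\gamma}{2}\sqrt n .$$ Consequently, for every distribution $\mathcal D$ on $\{-1,0,1\}^n$, $\mathbb E_{a\sim\mathcal D,r}\big[(\mathsf{Apr}(a,r)-\sum_{j=1}^n a_j)^2\big]\le\gamma^2 n$.
   Context: Algorithm $\mathsf{Apr}$ (logs base 2): set $p=\min\{6000\log^2 n\cdot\frac{B}{\gamma^2 n},1\}$ and counters $\Delta=\zeta=\Gamma=0$. For $j=1,\dots,n$: if $\zeta<20\log n\cdot pB$, draw an independent bit $r_j$ equal to $1$ with probability $p$, and if $r_j=1$ set $\Delta\leftarrow\Delta+a_j$ and $\zeta\leftarrow\zeta+\mathbb 1_{a_j\ne0}$; otherwise (if $\zeta\ge20\log n\cdot pB$) set $\Gamma\leftarrow\Gamma+a_j$. Output $\max\{\min\{\Delta/p+\Gamma,n\},-n\}$. *)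

theory Defs
  imports "HOL-Probability.Probability"
begin

text \<open>Streams are integer lists of length n (list index j
corresponds to a_{j+1}); the private randomness is a function r :: nat => bool
whose value r j is the coin r_{j+1}; it is only consulted while the algorithm
is in sampling mode.\<close>

definition apr_p :: "real \<Rightarrow> real \<Rightarrow> nat \<Rightarrow> real" where
  "apr_p \<gamma> B n = min (6000 * (log 2 (real n))^2 * B / (\<gamma>^2 * real n)) 1"

definition apr_step :: "real \<Rightarrow> real \<Rightarrow> nat \<Rightarrow> int \<Rightarrow> bool \<Rightarrow>
    real \<times> real \<times> real \<Rightarrow> real \<times> real \<times> real" where
  "apr_step \<gamma> B n aj rj st =
     (case st of (\<Delta>, \<zeta>, \<Gamma>) \<Rightarrow>
        if \<zeta> < 20 * log 2 (real n) * apr_p \<gamma> B n * B then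
          (if rj then (\<Delta> + real_of_int aj, \<zeta> + (if aj \<noteq> 0 then 1 else 0), \<Gamma>)
           else (\<Delta>, \<zeta>, \<Gamma>))
        else (\<Delta>, \<zeta>, \<Gamma> + real_of_int aj))"

definition apr_state :: "real \<Rightarrow> real \<Rightarrow> nat \<Rightarrow> int list \<Rightarrow> (nat \<Rightarrow> bool) \<Rightarrow> real \<times> real \<times> real" where
  "apr_state \<gamma> B n a r =
     foldl (\<lambda>st j. apr_step \<gamma> B n (a ! j) (r j) st) (0, 0, 0) [0..<n]"

definition apr :: "real \<Rightarrow> real \<Rightarrow> nat \<Rightarrow> int list \<Rightarrow> (nat \<Rightarrow> bool) \<Rightarrow> real" where
  "apr \<gamma> B n a r =
     (case apr_state \<gamma> B n a r of (\<Delta>, \<zeta>, \<Gamma>) \<Rightarrow>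
        max (min (\<Delta> / apr_p \<gamma> B n + \<Gamma>) (real n)) (- real n))"

definition apr_coins :: "real \<Rightarrow> real \<Rightarrow> nat \<Rightarrow> (nat \<Rightarrow> bool) pmf" where
  "apr_coins \<gamma> B n = Pi_pmf {..<n} False (\<lambda>_. bernoulli_pmf (apr_p \<gamma> B n))"

end

theory Submission imports Defs begin


definition ind :: "bool \<Rightarrow> real" where "ind b = (if b then 1 else 0)"

lemma exp_quad:
  fixes s :: real assumes "\<bar>s\<bar> \<le> 1" shows "exp s \<le> 1 + s + s^2"
proof (cases "s \<ge> 0")
  case True then show ?thesis using exp_bound[of s] assms by auto
next
  case False
  define x where "x = - s"
  have x: "0 \<le> x" "x \<le> 1" using False assms by (auto simp: x_def)
  have e: "1 + x + x^2/2 \<le> exp x" using exp_lower_Taylor_quadratic x by auto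
  have "(1 - x + x^2) * (1 + x + x^2/2) = 1 + x^2/2 + x^3/2 + x^4/2"
    by (simp add: field_simps power2_eq_square power3_eq_cube power4_eq_xxxx)
  also have "\<dots> \<ge> 1" using x by simp
  finally have "1 \<le> (1 - x + x^2) * exp x"
    by (rule order.trans) (rule mult_left_mono[OF e], use x in \<open>smt (verit) zero_le_power2\<close>)
  hence "exp (-x) \<le> 1 - x + x^2"
    by (simp add: exp_minus field_simps)
  thus ?thesis by (simp add: x_def)
qed

lemma bern_mgf:
  fixes p s :: real assumes "0 \<le> p" "p \<le> 1" "\<bar>s\<bar> \<le> 1"
  shows "exp (s * (1 - p)) * p + exp (s * (0 - p)) * (1 - p) \<le> exp (p * s^2)"
proof -
  have "exp (s * (1 - p)) * p + exp (s * (0 - p)) * (1 - p) = exp (- (s*p)) * (1 + p * (exp s - 1))"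
    by (simp add: algebra_simps exp_diff exp_minus field_simps)
  also have "\<dots> \<le> exp (- (s*p)) * exp (p * (exp s - 1))"
    using exp_ge_add_one_self[of "p * (exp s - 1)"] by (intro mult_left_mono) auto
  also have "\<dots> = exp (p * (exp s - 1 - s))" by (simp add: exp_add[symmetric] algebra_simps)
  also have "\<dots> \<le> exp (p * s^2)"
    using exp_quad[OF assms(3)] assms by (intro exp_mono mult_left_mono) auto
  finally show ?thesis .
qed


lemma finite_set_coins: "finite (set_pmf (Pi_pmf {..<(n::nat)} False (\<lambda>_. bernoulli_pmf p)))"
  by (subst set_Pi_pmf) (auto intro!: finite_PiE_dflt)

lemma tail:
  fixes c :: "nat \<Rightarrow> real" and p l u :: real
  assumes kn: "k \<le> n" and p: "0 \<le> p" "p \<le> 1" and l: "0 \<le> l" "l \<le> 1"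
    and c: "\<And>i. i < k \<Longrightarrow> c i \<in> {-1, 0, 1}"
  shows "measure_pmf.prob (Pi_pmf {..<n} False (\<lambda>_. bernoulli_pmf p))
           {r. (\<Sum>i<k. c i * (ind (r i) - p)) \<ge> u}
         \<le> exp (- l * u + l^2 * p * (\<Sum>i<k. (c i)^2))"
proof -
  define M where "M = Pi_pmf {..<n} False (\<lambda>_. bernoulli_pmf p)"
  define X where "X r = (\<Sum>i<k. c i * (ind (r i) - p))" for r :: "nat \<Rightarrow> bool"
  define f where "f i b = (if i < k then exp (l * c i * (ind b - p)) else 1)" for i b
  have fin: "finite (set_pmf M)" unfolding M_def by (rule finite_set_coins)
  have int: "integrable M g" for g :: "(nat \<Rightarrow> bool) \<Rightarrow> real"
    by (rule integrable_measure_pmf_finite[OF fin])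
  have "measure_pmf.prob M {r. X r \<ge> u} = measure_pmf.expectation M (indicator {r. X r \<ge> u})"
    by simp
  also have "\<dots> \<le> measure_pmf.expectation M (\<lambda>r. exp (- l * u) * exp (l * X r))"
  proof (rule integral_mono[OF int int])
    fix r
    show "indicator {r. X r \<ge> u} r \<le> exp (- l * u) * exp (l * X r)"
    proof (cases "X r \<ge> u")
      case True
      hence "0 \<le> - l * u + l * X r" using l by (simp add: algebra_simps mult_left_mono)
      hence "1 \<le> exp (- l * u + l * X r)" by simp
      thus ?thesis using True by (simp add: exp_add[symmetric])
    qed simp
  qed
  also have "\<dots> = exp (- l * u) * measure_pmf.expectation M (\<lambda>r. \<Prod>i\<in>{..<n}. f i (r i))"
  proof -
    have "exp (l * X r) = (\<Prod>i\<in>{..<n}. f i (r i))" for r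
    proof -
      have "(\<Prod>i\<in>{..<n}. f i (r i)) = (\<Prod>i\<in>{..<k}. f i (r i))"
        using kn by (intro prod.mono_neutral_right) (auto simp: f_def)
      also have "\<dots> = (\<Prod>i\<in>{..<k}. exp (l * (c i * (ind (r i) - p))))"
        by (intro prod.cong) (auto simp: f_def mult.assoc)
      also have "\<dots> = exp (l * X r)"
        by (simp add: X_def exp_sum sum_distrib_left)
      finally show ?thesis by simp
    qed
    thus ?thesis by simp
  qed
  also have "measure_pmf.expectation M (\<lambda>r. \<Prod>i\<in>{..<n}. f i (r i))
      = (\<Prod>i\<in>{..<n}. measure_pmf.expectation (bernoulli_pmf p) (f i))"
    unfolding M_def
    by (rule expectation_prod_Pi_pmf) (auto simp: f_def intro!: integrable_measure_pmf_finite)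
  also have "\<dots> \<le> (\<Prod>i\<in>{..<n}. (if i < k then exp (p * (l * c i)^2) else 1))"
  proof (rule prod_mono)
    fix i assume "i \<in> {..<n}"
    have "0 \<le> measure_pmf.expectation (bernoulli_pmf p) (f i)"
      by (rule integral_nonneg_AE) (auto simp: f_def)
    moreover have "measure_pmf.expectation (bernoulli_pmf p) (f i) \<le> (if i < k then exp (p * (l * c i)^2) else 1)"
    proof (cases "i < k")
      case True
      have "\<bar>l * c i\<bar> \<le> 1" using c[OF True] l by (auto simp: abs_mult)
      from bern_mgf[OF p this] True p show ?thesis
        by (simp add: f_def ind_def mult.assoc)
    qed (use p in \<open>simp add: f_def\<close>)
    ultimately show "0 \<le> measure_pmf.expectation (bernoulli_pmf p) (f i) \<and> measure_pmf.expectation (bernoulli_pmf p) (f i) \<le> (if i < k then exp (p * (l * c i)^2) else 1)" by blast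
  qed
  also have "\<dots> = (\<Prod>i\<in>{..<n}. exp (if i < k then p * (l * c i)^2 else 0))"
    by (intro prod.cong) auto
  also have "\<dots> = exp (\<Sum>i<n. if i < k then p * (l * c i)^2 else 0)"
    by (simp add: exp_sum)
  also have "(\<Sum>i<n. if i < k then p * (l * c i)^2 else 0) = (\<Sum>i<k. p * (l * c i)^2)"
    using kn by (intro sum.mono_neutral_cong_right) auto
  also have "\<dots> = l^2 * p * (\<Sum>i<k. (c i)^2)"
    by (simp add: sum_distrib_left power_mult_distrib mult_ac)
  finally have "measure_pmf.prob M {r. X r \<ge> u} \<le> exp (- l * u) * exp (l^2 * p * (\<Sum>i<k. (c i)^2))"
    by (simp add: mult_left_mono)
  thus ?thesis by (simp add: M_def X_def exp_add[symmetric])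
qed


definition Zc :: "int list \<Rightarrow> (nat \<Rightarrow> bool) \<Rightarrow> nat \<Rightarrow> real" where
  "Zc a r j = (\<Sum>i<j. if a ! i \<noteq> 0 then ind (r i) else 0)"

definition thr :: "real \<Rightarrow> real \<Rightarrow> nat \<Rightarrow> real" where
  "thr \<gamma> B n = 20 * log 2 (real n) * apr_p \<gamma> B n * B"

lemma Zc_Suc: "Zc a r (Suc j) = Zc a r j + (if a ! j \<noteq> 0 then ind (r j) else 0)"
  by (simp add: Zc_def)

lemma Zc_mono: "i \<le> j \<Longrightarrow> Zc a r i \<le> Zc a r j"
  unfolding Zc_def by (intro sum_mono2) (auto simp: ind_def)


lemma apr_inv:
  fixes j n :: nat and \<gamma> B :: real
  defines "T \<equiv> thr \<gamma> B n"
  assumes "foldl (\<lambda>st j. apr_step \<gamma> B n (a ! j) (r j) st) (0, 0, 0) [0..<j] = (D, z, G)"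
  shows "D = (\<Sum>i<j. if Zc a r i < T then of_int (a ! i) * ind (r i) else 0) \<and>
         G = (\<Sum>i<j. if Zc a r i < T then 0 else of_int (a ! i)) \<and>
         (Zc a r j < T \<longrightarrow> z = Zc a r j) \<and> (\<not> Zc a r j < T \<longrightarrow> \<not> z < T)"
  using assms(2)
proof (induction j arbitrary: D z G)
  case 0
  then show ?case by (simp add: Zc_def)
next
  case (Suc j)
  obtain D' z' G' where st: "foldl (\<lambda>st j. apr_step \<gamma> B n (a ! j) (r j) st) (0, 0, 0) [0..<j] = (D', z', G')"
    by (metis prod_cases3)
  note IH = Suc.IH[OF st]
  have step: "apr_step \<gamma> B n (a ! j) (r j) (D', z', G') = (D, z, G)"
    using Suc.prems st by simp
  have mono: "Zc a r j \<le> Zc a r (Suc j)" by (rule Zc_mono) simp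
  show ?case
  proof (cases "Zc a r j < T")
    case True
    with IH have zz: "z' = Zc a r j" by simp
    with True have "z' < T" by simp
    hence "D = D' + (if r j then of_int (a ! j) else 0) \<and> z = z' + (if r j \<and> a ! j \<noteq> 0 then 1 else 0) \<and> G = G'"
      using step unfolding apr_step_def T_def thr_def by (auto split: if_splits)
    then show ?thesis using IH True zz
      by (auto simp: Zc_Suc ind_def)
  next
    case False
    with IH have zz: "\<not> z' < T" by simp
    hence "D = D' \<and> z = z' \<and> G = G' + of_int (a ! j)"
      using step unfolding apr_step_def T_def thr_def by (auto split: if_splits)
    then show ?thesis using IH False zz mono
      by auto
  qed
qed


lemma abs_sum_list_le: "set a \<subseteq> {-1, 0, 1} \<Longrightarrow> \<bar>real_of_int (sum_list a)\<bar> \<le> real (length a)"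
proof (induction a)
  case (Cons x xs)
  then have "\<bar>real_of_int x\<bar> \<le> 1" by auto
  with Cons show ?case by simp
qed simp

lemma clamp_le:
  fixes U S m :: real assumes "\<bar>S\<bar> \<le> m"
  shows "\<bar>max (min U m) (- m) - S\<bar> \<le> \<bar>U - S\<bar>"
  using assms by (smt (verit))

lemma apr_err:
  fixes n :: nat and \<gamma> B :: real and a :: "int list"
  assumes "length a = n" "set a \<subseteq> {-1, 0, 1}"
  shows "\<bar>apr \<gamma> B n a r - real_of_int (sum_list a)\<bar> \<le>
    \<bar>\<Sum>i<n. if Zc a r i < thr \<gamma> B n then of_int (a ! i) * (ind (r i) / apr_p \<gamma> B n - 1) else 0\<bar>"
proof -
  obtain D z G where st: "apr_state \<gamma> B n a r = (D, z, G)" by (metis prod_cases3)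
  note inv = apr_inv[OF st[unfolded apr_state_def]]
  define T where "T = thr \<gamma> B n"
  define p where "p = apr_p \<gamma> B n"
  have S: "real_of_int (sum_list a) = (\<Sum>i<n. real_of_int (a ! i))"
    using assms(1) by (simp add: sum_list_sum_nth atLeast0LessThan)
  have Sb: "\<bar>real_of_int (sum_list a)\<bar> \<le> real n" using abs_sum_list_le[OF assms(2)] assms(1) by simp
  have "D / p + G - real_of_int (sum_list a) =
      (\<Sum>i<n. (if Zc a r i < T then of_int (a ! i) * ind (r i) else 0) / p
              + (if Zc a r i < T then 0 else of_int (a ! i)) - real_of_int (a ! i))"
    using inv by (simp add: S T_def p_def sum_divide_distrib sum.distrib sum_subtractf)
  also have "\<dots> = (\<Sum>i<n. if Zc a r i < T then of_int (a ! i) * (ind (r i) / p - 1) else 0)"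
    by (intro sum.cong) (auto simp: algebra_simps)
  finally have eq: "D / p + G - real_of_int (sum_list a) = \<dots>" .
  have "apr \<gamma> B n a r = max (min (D / p + G) (real n)) (- real n)"
    by (simp add: apr_def st p_def)
  hence "\<bar>apr \<gamma> B n a r - real_of_int (sum_list a)\<bar> \<le> \<bar>D / p + G - real_of_int (sum_list a)\<bar>"
    using clamp_le[OF Sb] by simp
  thus ?thesis using eq unfolding T_def p_def by simp
qed

lemma choose_k:
  fixes Z :: "nat \<Rightarrow> real"
  assumes mono: "\<And>i j. i \<le> j \<Longrightarrow> Z i \<le> Z j"
  shows "\<exists>k\<le>n. (\<forall>i<k. Z i < T) \<and> (\<Sum>i<n. if Z i < T then f i else 0) = (\<Sum>i<k. f i)"
proof (cases "\<forall>i<n. Z i < T")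
  case True
  then show ?thesis by (intro exI[of _ n]) auto
next
  case False
  define k where "k = (LEAST i. \<not> Z i < T)"
  from False obtain i0 where i0: "i0 < n" "\<not> Z i0 < T" by auto
  have kle: "k \<le> i0" unfolding k_def using i0 by (intro Least_le) auto
  have kT: "\<not> Z k < T" unfolding k_def using i0 by (intro LeastI) auto
  have lt: "\<forall>i<k. Z i < T" unfolding k_def using not_less_Least by blast
  have ge: "\<not> Z i < T" if "k \<le> i" for i using mono[OF that] kT by simp
  have "(\<Sum>i<n. if Z i < T then f i else 0) = (\<Sum>i<k. if Z i < T then f i else 0)"
    using kle i0 ge by (intro sum.mono_neutral_right) auto
  also have "\<dots> = (\<Sum>i<k. f i)" using lt by simp
  finally show ?thesis using kle i0 lt by (intro exI[of _ k]) auto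
qed


lemma numA:
  fixes L Q B p N :: real
  assumes L: "L \<ge> 1" and Q: "Q > 0" and BQ: "B > Q" and p: "p = 6000 * L^2 * B / Q^2"
    and N: "0 \<le> N" "N \<le> 50 * L * B"
  shows "\<exists>l. 0 \<le> l \<and> l \<le> 1 \<and> - l * (p * (Q / 2)) + l^2 * p * N \<le> - 6 * L"
proof -
  define K where "K = 50 * L * B"
  define t where "t = Q / 2"
  have B0: "B > 0" using Q BQ by simp
  have K0: "K > 0" using L B0 by (simp add: K_def)
  have p0: "p > 0" using L B0 Q by (simp add: p)
  have pt2: "p * t^2 = 1500 * L^2 * B" using Q by (simp add: p t_def power2_eq_square field_simps)
  show ?thesis
  proof (cases "t \<le> 2 * K")
    case True
    define l where "l = t / (2 * K)"
    have l0: "0 \<le> l" "l \<le> 1" using True K0 Q by (auto simp: l_def t_def)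
    have "l^2 * p * N \<le> l^2 * p * K" using N p0 by (intro mult_left_mono) (auto simp: K_def)
    hence "- l * (p * t) + l^2 * p * N \<le> - l * (p * t) + l^2 * p * K" by simp
    also have "\<dots> = - (p * t^2) / (4 * K)" using K0
      by (simp add: l_def power2_eq_square field_simps)
    also have "\<dots> = - (1500 * L^2 * B) / (200 * L * B)" by (simp add: pt2 K_def)
    also have "\<dots> = - 7.5 * L" using L B0 by (simp add: power2_eq_square field_simps)
    also have "\<dots> \<le> - 6 * L" using L by simp
    finally show ?thesis using l0 by (intro exI[of _ l]) (simp add: t_def)
  next
    case False
    have "- 1 * (p * t) + 1^2 * p * N \<le> - (p * t) + p * K"
      using N p0 by (simp add: K_def mult_left_mono)
    also have "\<dots> \<le> - (p * t) / 2"
    proof -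
      have "p * K \<le> p * (t / 2)" using False p0 by (intro mult_left_mono) auto
      thus ?thesis by simp
    qed
    also have "\<dots> = - 1500 * L^2 * (B / Q)" using Q by (simp add: p t_def power2_eq_square field_simps)
    also have "\<dots> \<le> - 1500 * L^2 * 1" using BQ Q L by (intro mult_left_mono_neg) auto
    also have "\<dots> \<le> - 6 * L"
    proof -
      have "L * L \<ge> L * 1" using L by (intro mult_left_mono) auto
      thus ?thesis using L by (simp add: power2_eq_square)
    qed
    finally show ?thesis by (intro exI[of _ 1]) (simp add: t_def)
  qed
qed

lemma numB:
  fixes L Q B p N :: real
  assumes L: "L \<ge> 1" and Q: "Q > 0" and BQ: "B > Q" and p: "p = 6000 * L^2 * B / Q^2"
    and N: "N > 50 * L * B"
  shows "- (1/4) * (p * N - 20 * L * p * B - 1) + (1/4)^2 * p * (N::real) \<le> - 6 * L"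
proof -
  have B0: "B > 0" using Q BQ by simp
  have p0: "p > 0" using L B0 Q by (simp add: p)
  have "B^2 / Q^2 \<ge> 1" using BQ Q by (simp add: power_mono)
  hence "p * B = 6000 * L^2 * (B^2 / Q^2)" by (simp add: p power2_eq_square)
  also have "\<dots> \<ge> 6000 * L^2 * 1" using \<open>B^2 / Q^2 \<ge> 1\<close> by (intro mult_left_mono) auto
  finally have pB: "p * B \<ge> 6000 * L^2" by simp
  define X where "X = L * p * B"
  have "L^2 \<ge> 1" using L by (simp add: one_le_power)
  have "X \<ge> L * (6000 * L^2)" unfolding X_def using pB L by (simp add: mult.assoc mult_left_mono)
  moreover have "L * (6000 * L^2) \<ge> 6000 * L" using \<open>L^2 \<ge> 1\<close> L by simp
  ultimately have X6: "X \<ge> 6000 * L" by linarith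
  have "p * (50 * L * B) < p * N" by (rule mult_strict_left_mono[OF N p0])
  hence "p * N \<ge> 50 * X" unfolding X_def by (simp add: algebra_simps)
  have "- (1/4) * (p * N - 20 * L * p * B - 1) + (1/4)^2 * p * N = - 3 * (p * N) / 16 + (20 * X + 1) / 4"
    by (simp add: X_def field_simps power2_eq_square)
  also have "\<dots> \<le> - 6 * L" using \<open>p * N \<ge> 50 * X\<close> X6 L by (simp add: field_simps)
  finally show ?thesis .
qed


lemma final_sum:
  fixes n :: nat and L :: real
  assumes n2: "n \<ge> 2" and L: "L = log 2 (real n)"
  shows "real (Suc n) * (2 * exp (- 6 * L)) \<le> 1 / real n ^ 3"
proof -
  have n0: "real n > 0" using n2 by simp
  have lnn: "ln (real n) \<ge> 0" using n2 by simp
  have "L = ln (real n) / ln 2" by (simp add: L log_def)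
  also have "\<dots> \<ge> ln (real n)" using lnn ln_2_less_1 by (simp add: divide_simps mult_left_le)
  finally have "L \<ge> ln (real n)" .
  hence "exp (- 6 * L) \<le> exp (- (real 6 * ln (real n)))" by simp
  also have "exp (real 6 * ln (real n)) = real n ^ 6" by (subst exp_of_nat_mult) (use n0 in simp)
  hence "exp (- (real 6 * ln (real n))) = 1 / real n ^ 6" by (simp add: exp_minus field_simps)
  finally have e: "exp (- 6 * L) \<le> 1 / real n ^ 6" .
  have "real (Suc n) * (2 * exp (- 6 * L)) \<le> real (Suc n) * (2 * (1 / real n ^ 6))"
    using e by (intro mult_left_mono) auto
  also have "\<dots> \<le> 1 / real n ^ 3"
  proof -
    have "real n ^ 2 \<ge> 2 ^ 2" using n2 by (intro power_mono) auto
    hence "real n ^ 3 \<ge> 4 * real n" using n0 by (simp add: power3_eq_cube power2_eq_square)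
    hence "2 * real (Suc n) \<le> real n ^ 3" using n2 by simp
    hence "2 * real (Suc n) * real n ^ 3 \<le> real n ^ 3 * real n ^ 3" using n0 by (intro mult_right_mono) auto
    thus ?thesis using n0 by (simp add: field_simps power_add[symmetric] mult.assoc)
  qed
  finally show ?thesis .
qed


lemma main_mid:
  fixes n :: nat and \<gamma> B :: real and a :: "int list"
  assumes n2: "n \<ge> 2" and g: "\<gamma> > 4 / sqrt (real n)" and BQ: "B > \<gamma> * sqrt (real n)"
    and plt: "apr_p \<gamma> B n < 1" and len: "length a = n" and aset: "set a \<subseteq> {-1, 0, 1}"
  shows "measure_pmf.prob (apr_coins \<gamma> B n)
      {r. \<bar>apr \<gamma> B n a r - real_of_int (sum_list a)\<bar> > \<gamma> / 2 * sqrt (real n)} \<le> 1 / real n ^ 3"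
proof -
  define L where "L = log 2 (real n)"
  define Q where "Q = \<gamma> * sqrt (real n)"
  define p where "p = apr_p \<gamma> B n"
  define T where "T = thr \<gamma> B n"
  define M where "M = apr_coins \<gamma> B n"
  define t where "t = \<gamma> / 2 * sqrt (real n)"
  have n0: "real n > 0" using n2 by simp
  have L1: "L \<ge> 1" using n2 by (simp add: L_def)
  have g0: "\<gamma> > 0" using g n0 by (smt (verit) divide_pos_pos real_sqrt_gt_0_iff)
  have Q0: "Q > 0" using g0 n0 by (simp add: Q_def)
  have BQ': "B > Q" using BQ by (simp add: Q_def)
  have QQ: "\<gamma>^2 * real n = Q^2" using n0 by (simp add: Q_def power_mult_distrib)
  have pdef: "p = 6000 * L^2 * B / Q^2"
    using plt unfolding p_def apr_p_def L_def QQ by (simp add: min_def split: if_splits)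
  have B0: "B > 0" using Q0 BQ' by simp
  have p0: "p > 0" using L1 Q0 B0 by (simp add: pdef)
  have p1: "p \<le> 1" using plt by (simp add: p_def)
  have Tdef: "T = 20 * L * p * B" by (simp add: T_def thr_def L_def p_def)
  have tQ: "t = Q / 2" by (simp add: t_def Q_def)
  have Mdef: "M = Pi_pmf {..<n} False (\<lambda>_. bernoulli_pmf p)" by (simp add: M_def apr_coins_def p_def)
  define W where "W k r = (\<Sum>i<k. real_of_int (a ! i) * (ind (r i) - p))" for k r
  define Bad where "Bad k = {r. (\<forall>i<k. Zc a r i < T) \<and> \<bar>W k r\<bar> > p * t}" for k
  have ain: "real_of_int (a ! i) \<in> {-1, 0, 1}" if "i < n" for i
  proof -
    have "a ! i \<in> set a" using that len by simp
    with aset show ?thesis by auto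
  qed
  have sub: "{r. \<bar>apr \<gamma> B n a r - real_of_int (sum_list a)\<bar> > t} \<subseteq> (\<Union>k\<in>{..n}. Bad k)"
  proof
    fix r assume "r \<in> {r. \<bar>apr \<gamma> B n a r - real_of_int (sum_list a)\<bar> > t}"
    hence big: "\<bar>apr \<gamma> B n a r - real_of_int (sum_list a)\<bar> > t" by simp
    obtain k where k: "k \<le> n" "\<forall>i<k. Zc a r i < T"
      "(\<Sum>i<n. if Zc a r i < T then real_of_int (a ! i) * (ind (r i) / p - 1) else 0)
        = (\<Sum>i<k. real_of_int (a ! i) * (ind (r i) / p - 1))"
      using choose_k[of "Zc a r" n T "\<lambda>i. real_of_int (a ! i) * (ind (r i) / p - 1)"] Zc_mono by blast
    have "(\<Sum>i<k. real_of_int (a ! i) * (ind (r i) / p - 1)) = W k r / p"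
      using p0 by (simp add: W_def sum_divide_distrib field_simps)
    have e: "\<bar>apr \<gamma> B n a r - real_of_int (sum_list a)\<bar> \<le>
      \<bar>\<Sum>i<n. if Zc a r i < T then of_int (a ! i) * (ind (r i) / p - 1) else 0\<bar>"
      using apr_err[OF len aset, of \<gamma> B r] unfolding T_def p_def .
    have "\<bar>W k r / p\<bar> > t" using e k(3) big \<open>(\<Sum>i<k. _) = W k r / p\<close> by simp
    hence "\<bar>W k r\<bar> > p * t" using p0 by (simp add: abs_div field_simps)
    thus "r \<in> (\<Union>k\<in>{..n}. Bad k)" using k by (auto simp: Bad_def)
  qed
  have bnd: "measure_pmf.prob M (Bad k) \<le> 2 * exp (- 6 * L)" if kn: "k \<le> n" for k
  proof -
    define N where "N = (\<Sum>i<k. (real_of_int (a ! i))^2)"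
    have cin: "real_of_int (a ! i) \<in> {-1, 0, 1}" if "i < k" for i using ain that kn by simp
    have N0: "N \<ge> 0" by (simp add: N_def sum_nonneg)
    show ?thesis
    proof (cases "N \<le> 50 * L * B")
      case True
      obtain l where l: "0 \<le> l" "l \<le> 1" "- l * (p * (Q / 2)) + l^2 * p * N \<le> - 6 * L"
        using numA[OF L1 Q0 BQ' pdef N0 True] by blast
      have t1: "measure_pmf.prob M {r. (\<Sum>i<k. real_of_int (a ! i) * (ind (r i) - p)) \<ge> p * t}
          \<le> exp (- l * (p * t) + l^2 * p * N)"
        unfolding Mdef N_def using tail[OF kn p0[THEN less_imp_le] p1 l(1,2), of "\<lambda>i. real_of_int (a ! i)"] cin
        by blast
      have t2: "measure_pmf.prob M {r. (\<Sum>i<k. (- real_of_int (a ! i)) * (ind (r i) - p)) \<ge> p * t}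
          \<le> exp (- l * (p * t) + l^2 * p * N)"
      proof -
        have "\<And>i. i < k \<Longrightarrow> - real_of_int (a ! i) \<in> {-1, 0, 1}" using cin by auto
        from tail[OF kn p0[THEN less_imp_le] p1 l(1,2), of "\<lambda>i. - real_of_int (a ! i)", OF this]
        show ?thesis unfolding Mdef N_def by simp
      qed
      have "Bad k \<subseteq> {r. (\<Sum>i<k. real_of_int (a ! i) * (ind (r i) - p)) \<ge> p * t}
                 \<union> {r. (\<Sum>i<k. (- real_of_int (a ! i)) * (ind (r i) - p)) \<ge> p * t}"
        by (auto simp: Bad_def W_def sum_negf abs_less_iff)
      hence "measure_pmf.prob M (Bad k) \<le> measure_pmf.prob M ({r. (\<Sum>i<k. real_of_int (a ! i) * (ind (r i) - p)) \<ge> p * t}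
                 \<union> {r. (\<Sum>i<k. (- real_of_int (a ! i)) * (ind (r i) - p)) \<ge> p * t})"
        by (intro measure_pmf.finite_measure_mono) auto
      also have "\<dots> \<le> measure_pmf.prob M {r. (\<Sum>i<k. real_of_int (a ! i) * (ind (r i) - p)) \<ge> p * t}
                 + measure_pmf.prob M {r. (\<Sum>i<k. (- real_of_int (a ! i)) * (ind (r i) - p)) \<ge> p * t}"
        by (rule measure_Un_le) auto
      also have "\<dots> \<le> 2 * exp (- l * (p * t) + l^2 * p * N)" using t1 t2 by simp
      also have "\<dots> \<le> 2 * exp (- 6 * L)" using l(3) by (simp add: tQ)
      finally show ?thesis .
    next
      case False
      hence NK: "N > 50 * L * B" by simp
      have k0: "k \<noteq> 0"
      proof
        assume "k = 0"
        hence "N = 0" by (simp add: N_def)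
        moreover have "50 * L * B > 0" using L1 B0 by simp
        ultimately show False using NK by simp
      qed
      define u where "u = p * N - T - 1"
      have sq: "(real_of_int (a ! i))^2 = (if a ! i \<noteq> 0 then 1 else 0)" if "i < k" for i
        using cin[OF that] by auto
      have cin2: "\<And>i. i < k \<Longrightarrow> (- ((real_of_int (a ! i))^2)) \<in> {-1, 0, 1}" using sq by auto
      have sq2: "(\<Sum>i<k. (- ((real_of_int (a ! i))^2))^2) = N"
        unfolding N_def by (intro sum.cong) (auto simp: sq)
      have t3: "measure_pmf.prob M {r. (\<Sum>i<k. (- ((real_of_int (a ! i))^2)) * (ind (r i) - p)) \<ge> u}
          \<le> exp (- (1/4) * u + (1/4)^2 * p * N)"
      proof -
        have l4: "0 \<le> (1/4::real)" "(1/4::real) \<le> 1" by auto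
        show ?thesis
          using tail[where c="\<lambda>i. - ((real_of_int (a ! i))^2)" and u=u, OF kn p0[THEN less_imp_le] p1 l4 cin2]
          unfolding Mdef sq2 by simp
      qed
      have "Bad k \<subseteq> {r. (\<Sum>i<k. (- ((real_of_int (a ! i))^2)) * (ind (r i) - p)) \<ge> u}"
      proof
        fix r assume "r \<in> Bad k"
        hence "Zc a r (k - 1) < T" using k0 by (auto simp: Bad_def)
        moreover have "Zc a r k = Zc a r (k - 1) + (if a ! (k - 1) \<noteq> 0 then ind (r (k - 1)) else 0)"
          using Zc_Suc[of a r "k - 1"] k0 by simp
        moreover have "(if a ! (k - 1) \<noteq> 0 then ind (r (k - 1)) else 0) \<le> 1" by (simp add: ind_def)
        ultimately have Zk: "Zc a r k < T + 1" by linarith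
        have "Zc a r k = (\<Sum>i<k. (real_of_int (a ! i))^2 * ind (r i))"
          unfolding Zc_def by (intro sum.cong) (auto simp: sq)
        hence "(\<Sum>i<k. (- ((real_of_int (a ! i))^2)) * (ind (r i) - p)) = p * N - Zc a r k"
          by (simp add: N_def algebra_simps sum_subtractf sum_distrib_left sum_negf)
        thus "r \<in> {r. (\<Sum>i<k. (- ((real_of_int (a ! i))^2)) * (ind (r i) - p)) \<ge> u}"
          using Zk by (simp add: u_def)
      qed
      hence "measure_pmf.prob M (Bad k) \<le> measure_pmf.prob M {r. (\<Sum>i<k. (- ((real_of_int (a ! i))^2)) * (ind (r i) - p)) \<ge> u}"
        by (intro measure_pmf.finite_measure_mono) auto
      also have "\<dots> \<le> exp (- (1/4) * u + (1/4)^2 * p * N)" by (rule t3)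
      also have "\<dots> \<le> exp (- 6 * L)"
        using numB[OF L1 Q0 BQ' pdef NK] by (simp add: u_def Tdef)
      also have "\<dots> \<le> 2 * exp (- 6 * L)" by simp
      finally show ?thesis .
    qed
  qed
  have "measure_pmf.prob M {r. \<bar>apr \<gamma> B n a r - real_of_int (sum_list a)\<bar> > t}
      \<le> measure_pmf.prob M (\<Union>k\<in>{..n}. Bad k)"
    using sub by (intro measure_pmf.finite_measure_mono) auto
  also have "\<dots> \<le> (\<Sum>k\<in>{..n}. measure_pmf.prob M (Bad k))"
    by (rule measure_pmf.finite_measure_subadditive_finite) auto
  also have "\<dots> \<le> (\<Sum>k\<in>{..n}. 2 * exp (- 6 * L))"
    using bnd by (intro sum_mono) auto
  also have "\<dots> = real (Suc n) * (2 * exp (- 6 * L))" by simp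
  also have "\<dots> \<le> 1 / real n ^ 3" by (rule final_sum[OF n2 L_def])
  finally show ?thesis by (simp add: M_def t_def)
qed


lemma bad_prob:
  fixes n :: nat and \<gamma> B :: real and a :: "int list"
  assumes n1: "n \<ge> 1" and g: "\<gamma> > 4 / sqrt (real n)" and BQ: "B > \<gamma> * sqrt (real n)"
    and len: "length a = n" and aset: "set a \<subseteq> {-1, 0, 1}"
  shows "measure_pmf.prob (apr_coins \<gamma> B n)
      {r. \<bar>apr \<gamma> B n a r - real_of_int (sum_list a)\<bar> > \<gamma> / 2 * sqrt (real n)} \<le> 1 / real n ^ 3"
proof (cases "n = 1")
  case True
  then show ?thesis by simp
next
  case False
  hence n2: "n \<ge> 2" using n1 by simp
  show ?thesis
  proof (cases "apr_p \<gamma> B n < 1")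
    case True
    then show ?thesis using main_mid[OF n2 g BQ True len aset] by simp
  next
    case False
    hence p1: "apr_p \<gamma> B n = 1" by (simp add: apr_p_def min_def split: if_splits)
    have "measure_pmf.prob (apr_coins \<gamma> B n)
      {r. \<bar>apr \<gamma> B n a r - real_of_int (sum_list a)\<bar> > \<gamma> / 2 * sqrt (real n)} = 0"
    proof (subst measure_pmf_zero_iff, rule equals0I)
      fix r assume "r \<in> set_pmf (apr_coins \<gamma> B n) \<inter> {r. \<bar>apr \<gamma> B n a r - real_of_int (sum_list a)\<bar> > \<gamma> / 2 * sqrt (real n)}"
      hence r: "r \<in> set_pmf (apr_coins \<gamma> B n)"
        and big: "\<bar>apr \<gamma> B n a r - real_of_int (sum_list a)\<bar> > \<gamma> / 2 * sqrt (real n)" by auto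
      have "4 / sqrt (real n) > 0" using n2 by simp
      hence g0: "\<gamma> > 0" using g by linarith
      have "False \<notin> set_pmf (bernoulli_pmf 1)" by (simp add: set_pmf_eq)
      hence rt: "r i" if "i < n" for i
        using r that unfolding apr_coins_def p1 by (subst (asm) set_Pi_pmf) (auto simp: PiE_dflt_def)
      have "(\<Sum>i<n. if Zc a r i < thr \<gamma> B n then of_int (a ! i) * (ind (r i) / apr_p \<gamma> B n - 1) else (0::real)) = 0"
        by (intro sum.neutral) (auto simp: rt ind_def p1)
      with apr_err[OF len aset, of \<gamma> B r] have "\<bar>apr \<gamma> B n a r - real_of_int (sum_list a)\<bar> \<le> 0" by simp
      moreover have "\<gamma> / 2 * sqrt (real n) \<ge> 0" using g0 by simp
      ultimately show False using big by linarith
    qed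
    then show ?thesis by simp
  qed
qed

theorem proposition4p6:
  fixes n :: nat and \<gamma> B :: real
  assumes "n \<ge> 1" and "\<gamma> > 4 / sqrt (real n)" and "B > \<gamma> * sqrt (real n)"
  shows "(\<forall>a :: int list. length a = n \<and> set a \<subseteq> {-1, 0, 1} \<longrightarrow>
            measure_pmf.prob (apr_coins \<gamma> B n)
              {r. \<bar>apr \<gamma> B n a r - real_of_int (sum_list a)\<bar> \<le> \<gamma> / 2 * sqrt (real n)}
            \<ge> 1 - 1 / (real n)^3)
       \<and> (\<forall>D :: int list pmf. set_pmf D \<subseteq> {a. length a = n \<and> set a \<subseteq> {-1, 0, 1}} \<longrightarrow>
            measure_pmf.expectation (pair_pmf D (apr_coins \<gamma> B n))
              (\<lambda>(a, r). (apr \<gamma> B n a r - real_of_int (sum_list a))^2)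
            \<le> \<gamma>^2 * real n)"
proof -
  define t where "t = \<gamma> / 2 * sqrt (real n)"
  define C where "C = apr_coins \<gamma> B n"
  have n0: "real n > 0" using assms(1) by simp
  have "4 / sqrt (real n) > 0" using n0 by simp
  hence g0: "\<gamma> > 0" using assms(2) by linarith
  have t0: "t \<ge> 0" using g0 by (simp add: t_def)
  have good: "measure_pmf.prob C {r. \<bar>apr \<gamma> B n a r - real_of_int (sum_list a)\<bar> \<le> t} =
       1 - measure_pmf.prob C {r. \<bar>apr \<gamma> B n a r - real_of_int (sum_list a)\<bar> > t}" for a
  proof -
    have "{r. \<bar>apr \<gamma> B n a r - real_of_int (sum_list a)\<bar> \<le> t} =
          space (measure_pmf C) - {r. \<bar>apr \<gamma> B n a r - real_of_int (sum_list a)\<bar> > t}"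
      by auto
    thus ?thesis using measure_pmf.prob_compl[of "{r. \<bar>apr \<gamma> B n a r - real_of_int (sum_list a)\<bar> > t}" C] by simp
  qed
  have part1: "\<forall>a :: int list. length a = n \<and> set a \<subseteq> {-1, 0, 1} \<longrightarrow>
      measure_pmf.prob C {r. \<bar>apr \<gamma> B n a r - real_of_int (sum_list a)\<bar> \<le> t} \<ge> 1 - 1 / (real n)^3"
  proof (intro allI impI)
    fix a :: "int list" assume "length a = n \<and> set a \<subseteq> {-1, 0, 1}"
    hence "measure_pmf.prob C {r. \<bar>apr \<gamma> B n a r - real_of_int (sum_list a)\<bar> > t} \<le> 1 / real n ^ 3"
      using bad_prob[OF assms] unfolding t_def C_def by blast
    thus "measure_pmf.prob C {r. \<bar>apr \<gamma> B n a r - real_of_int (sum_list a)\<bar> \<le> t} \<ge> 1 - 1 / (real n)^3"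
      using good[of a] by linarith
  qed
  have inner: "measure_pmf.expectation C (\<lambda>r. (apr \<gamma> B n a r - real_of_int (sum_list a))^2)
      \<le> \<gamma>^2 * real n" if len: "length a = n" and aset: "set a \<subseteq> {-1, 0, 1}" for a
  proof -
    define bad where "bad = {r. \<bar>apr \<gamma> B n a r - real_of_int (sum_list a)\<bar> > t}"
    have pb: "measure_pmf.prob C bad \<le> 1 / real n ^ 3"
      using bad_prob[OF assms len aset] unfolding bad_def t_def C_def .
    have Sb: "\<bar>real_of_int (sum_list a)\<bar> \<le> real n" using abs_sum_list_le[OF aset] len by simp
    have ptw: "(apr \<gamma> B n a r - real_of_int (sum_list a))^2 \<le> t^2 + 4 * real n ^ 2 * indicator bad r" for r
    proof (cases "r \<in> bad")
      case True
      have "\<bar>apr \<gamma> B n a r\<bar> \<le> real n" by (auto simp: apr_def abs_le_iff split: prod.splits)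
      hence "\<bar>apr \<gamma> B n a r - real_of_int (sum_list a)\<bar> \<le> 2 * real n" using Sb by linarith
      hence "(apr \<gamma> B n a r - real_of_int (sum_list a))^2 \<le> (2 * real n)^2"
        by (metis abs_ge_zero power2_abs power_mono)
      hence A: "(apr \<gamma> B n a r - real_of_int (sum_list a))^2 \<le> 4 * real n ^ 2" by (simp add: power_mult_distrib)
      have t2: "t^2 \<ge> 0" by simp
      have ind1: "indicator bad r = (1::real)" using True by simp
      show ?thesis unfolding ind1 using A t2 by linarith
    next
      case False
      hence "\<bar>apr \<gamma> B n a r - real_of_int (sum_list a)\<bar> \<le> t" by (simp add: bad_def)
      hence "(apr \<gamma> B n a r - real_of_int (sum_list a))^2 \<le> t^2"
        by (metis abs_ge_zero power2_abs power_mono)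
      thus ?thesis using False by simp
    qed
    have fin: "finite (set_pmf C)" unfolding C_def apr_coins_def by (rule finite_set_coins)
    have "measure_pmf.expectation C (\<lambda>r. (apr \<gamma> B n a r - real_of_int (sum_list a))^2)
        \<le> measure_pmf.expectation C (\<lambda>r. t^2 + 4 * real n ^ 2 * indicator bad r)"
      by (intro integral_mono integrable_measure_pmf_finite[OF fin] ptw)
    also have "\<dots> = t^2 + 4 * real n ^ 2 * measure_pmf.prob C bad"
      by (subst Bochner_Integration.integral_add) (auto intro!: integrable_measure_pmf_finite[OF fin])
    also have "\<dots> \<le> t^2 + 4 * real n ^ 2 * (1 / real n ^ 3)"
      using pb by (intro add_left_mono mult_left_mono) auto
    also have "\<dots> = \<gamma>^2 * real n / 4 + 4 / real n"
      using n0 by (simp add: t_def power_mult_distrib power2_eq_square power3_eq_cube field_simps)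
    also have "\<dots> \<le> \<gamma>^2 * real n"
    proof -
      have "sqrt (real n) > 0" using n0 by simp
      have "\<gamma> * sqrt (real n) > 4" using assms(2) \<open>sqrt (real n) > 0\<close> by (simp add: field_simps)
      hence "(\<gamma> * sqrt (real n))^2 > 4^2" by (intro power_strict_mono) auto
      hence "\<gamma>^2 * real n > 16" using n0 by (simp add: power_mult_distrib)
      moreover have "4 / real n \<le> 4" using assms(1) by (simp add: field_simps)
      ultimately show ?thesis by linarith
    qed
    finally show ?thesis .
  qed
  have part2: "\<forall>D :: int list pmf. set_pmf D \<subseteq> {a. length a = n \<and> set a \<subseteq> {-1, 0, 1}} \<longrightarrow>
            measure_pmf.expectation (pair_pmf D C)
              (\<lambda>(a, r). (apr \<gamma> B n a r - real_of_int (sum_list a))^2) \<le> \<gamma>^2 * real n"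
  proof (intro allI impI)
    fix D :: "int list pmf"
    assume D: "set_pmf D \<subseteq> {a. length a = n \<and> set a \<subseteq> {-1, 0, 1}}"
    define f where "f = (\<lambda>(a, r). (apr \<gamma> B n a r - real_of_int (sum_list a))^2)"
    have fin: "finite (set_pmf C)" unfolding C_def apr_coins_def by (rule finite_set_coins)
    have eq1: "measure_pmf.expectation (pair_pmf D C) f = enn2real (\<integral>\<^sup>+ x. ennreal (f x) \<partial>pair_pmf D C)"
      by (rule integral_eq_nn_integral) (auto simp: f_def)
    have "(\<integral>\<^sup>+ x. ennreal (f x) \<partial>pair_pmf D C) = (\<integral>\<^sup>+ a. \<integral>\<^sup>+ r. ennreal (f (a, r)) \<partial>C \<partial>D)"
      by (rule nn_integral_pair_pmf')
    also have "\<dots> \<le> (\<integral>\<^sup>+ a. ennreal (\<gamma>^2 * real n) \<partial>D)"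
    proof (rule nn_integral_mono_AE, rule AE_pmfI)
      fix a assume "a \<in> set_pmf D"
      hence av: "length a = n" "set a \<subseteq> {-1, 0, 1}" using D by auto
      have "(\<integral>\<^sup>+ r. ennreal (f (a, r)) \<partial>C) = ennreal (measure_pmf.expectation C (\<lambda>r. f (a, r)))"
        by (rule nn_integral_eq_integral) (auto simp: f_def intro!: integrable_measure_pmf_finite[OF fin])
      also have "\<dots> \<le> ennreal (\<gamma>^2 * real n)"
        using inner[OF av] by (intro ennreal_leI) (simp add: f_def)
      finally show "(\<integral>\<^sup>+ r. ennreal (f (a, r)) \<partial>C) \<le> ennreal (\<gamma>^2 * real n)" .
    qed
    also have "\<dots> = ennreal (\<gamma>^2 * real n)" by (simp add: measure_pmf.emeasure_space_1)
    finally have "(\<integral>\<^sup>+ x. ennreal (f x) \<partial>pair_pmf D C) \<le> ennreal (\<gamma>^2 * real n)" .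
    hence "enn2real (\<integral>\<^sup>+ x. ennreal (f x) \<partial>pair_pmf D C) \<le> \<gamma>^2 * real n"
      by (intro enn2real_leI) auto
    with eq1 show "measure_pmf.expectation (pair_pmf D C) (\<lambda>(a, r). (apr \<gamma> B n a r - real_of_int (sum_list a))^2) \<le> \<gamma>^2 * real n"
      unfolding f_def by simp
  qed
  show ?thesis using part1 part2 unfolding t_def C_def by blast
qed

end
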